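(* Let $n\ge 5$. Then for every $1\le r\le n$, every subset of $N(W_r)$ of size at least $n-2$ is a resolving set of $L(n)$.
   Context: For $n\ge 5$, $H(n)$ is the graph with vertex set $V_1\cup V_2$, where $V_1=\{v_1,\dots,v_n\}$ and $V_2=\{v_iv_j: 1\le i<j\le n\}$, and $v_r$ is adjacent to $v_iv_j$ iff $r\in\{i,j\}$ (no other edges). $L(n)$ is the line graph of $H(n)$: its vertices are the edges $\{v_r,v_iv_j\}$ of $H(n)$ (with $r\in\{i,j\}$), two being adjacent iff they share an endpoint. For $1\le r\le n$, $W_r$ is the set of vertices of $L(n)$ of the form $\{v_r,v_iv_j\}$ (the edges of $H(n)$ incident to $v_r$); it is a maximal clique of size $n-1$. $N(W_r)$ denotes the set of vertices of $L(n)$ not in $W_r$ that are adjacent to some vertex of $W_r$, i.e. $N(W_r)=\{\{v_k,v_iv_j\}: k\neq r,\ \{i,j\}=\{r,k\}\}$, a set of size $n-1$. $d$ is the shortest-path distance; a set $Q$ of vertices is a resolving set of $G$ if any two distinct vertices $x,y$ satisfy $(d(x,q))_{q\in Q}\neq(d(y,q))_{q\in Q}$. *)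

theory Defs
  imports Main
begin

definition is_walk :: "'a set \<Rightarrow> ('a \<Rightarrow> 'a \<Rightarrow> bool) \<Rightarrow> 'a list \<Rightarrow> bool" where
  "is_walk V E p \<longleftrightarrow> p \<noteq> [] \<and> set p \<subseteq> V \<and>
     (\<forall>i. Suc i < length p \<longrightarrow> E (p ! i) (p ! Suc i))"

definition gdist :: "'a set \<Rightarrow> ('a \<Rightarrow> 'a \<Rightarrow> bool) \<Rightarrow> 'a \<Rightarrow> 'a \<Rightarrow> nat" where
  "gdist V E x y = (LEAST k. \<exists>p. is_walk V E p \<and> hd p = x \<and> last p = y \<and> length p = Suc k)"

definition resolving_set :: "'a set \<Rightarrow> ('a \<Rightarrow> 'a \<Rightarrow> bool) \<Rightarrow> 'a set \<Rightarrow> bool" where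
  "resolving_set V E Q \<longleftrightarrow> Q \<subseteq> V \<and>
     (\<forall>x\<in>V. \<forall>y\<in>V. x \<noteq> y \<longrightarrow> (\<exists>q\<in>Q. gdist V E x q \<noteq> gdist V E y q))"

text \<open>The graph L(n): the vertex \{v_r, v_iv_j\} (r in \{i,j\}) is encoded as the pair (r, \{i,j\}).
  Two distinct vertices are adjacent iff the corresponding edges of H(n) share an endpoint,
  i.e. same v_r or same v_iv_j.\<close>

definition LV :: "nat \<Rightarrow> (nat \<times> nat set) set" where
  "LV n = {(r, e). \<exists>i j. 1 \<le> i \<and> i < j \<and> j \<le> n \<and> e = {i, j} \<and> r \<in> {i, j}}"

definition LE :: "nat \<times> nat set \<Rightarrow> nat \<times> nat set \<Rightarrow> bool" where
  "LE x y \<longleftrightarrow> x \<noteq> y \<and> (fst x = fst y \<or> snd x = snd y)"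

definition W :: "nat \<Rightarrow> nat \<Rightarrow> (nat \<times> nat set) set" where
  "W n r = {x \<in> LV n. fst x = r}"

definition NW :: "nat \<Rightarrow> nat \<Rightarrow> (nat \<times> nat set) set" where
  "NW n r = {x \<in> LV n. x \<notin> W n r \<and> (\<exists>y\<in>W n r. LE x y)}"

end

theory Submission
  imports Defs
begin

lemma gdist_eqI:
  assumes "is_walk V E p" "hd p = x" "last p = y" "length p = Suc k"
    and "\<And>p m. is_walk V E p \<Longrightarrow> hd p = x \<Longrightarrow> last p = y \<Longrightarrow> length p = Suc m \<Longrightarrow> k \<le> m"
  shows "gdist V E x y = k"
  unfolding gdist_def
  by (rule Least_equality) (use assms in blast)+

lemma walk1: "is_walk V E p \<Longrightarrow> length p = Suc 0 \<Longrightarrow> hd p = last p"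
  by (cases p) (auto simp: is_walk_def)

lemma walk2: "is_walk V E p \<Longrightarrow> length p = Suc (Suc 0) \<Longrightarrow> E (hd p) (last p)"
proof -
  assume w: "is_walk V E p" and l: "length p = Suc (Suc 0)"
  then obtain u v where "p = [u, v]"
    by (metis Suc_length_conv length_0_conv)
  with w show ?thesis unfolding is_walk_def by force
qed

lemma walk3: "is_walk V E p \<Longrightarrow> length p = Suc (Suc (Suc 0)) \<Longrightarrow> \<exists>z\<in>V. E (hd p) z \<and> E z (last p)"
proof -
  assume w: "is_walk V E p" and l: "length p = Suc (Suc (Suc 0))"
  then obtain u v t where p: "p = [u, v, t]"
    by (metis Suc_length_conv length_0_conv)
  from w p have "E u v" unfolding is_walk_def by force
  moreover from w p have "E v t" unfolding is_walk_def
    by (metis One_nat_def Suc_1 lessI nth_Cons_Suc nth_Cons_0 numeral_3_eq_3 length_Cons list.size(3))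
  moreover from w p have "v \<in> V" unfolding is_walk_def by auto
  ultimately show ?thesis using p by auto
qed

lemma gd0: "x \<in> V \<Longrightarrow> gdist V E x x = 0"
  by (rule gdist_eqI[where p="[x]"]) (auto simp: is_walk_def)

lemma gd1: assumes "x \<noteq> y" "E x y" "x \<in> V" "y \<in> V" shows "gdist V E x y = 1"
proof (rule gdist_eqI[where p="[x,y]"])
  show "is_walk V E [x, y]" using assms by (auto simp: is_walk_def less_Suc_eq)
  fix p m assume "is_walk V E p" "hd p = x" "last p = y" "length p = Suc m"
  then show "1 \<le> m" using walk1 assms by (cases m) fastforce+
qed auto

lemma gd2: assumes "x \<noteq> y" "\<not> E x y" "z \<in> V" "E x z" "E z y" "x \<in> V" "y \<in> V"
  shows "gdist V E x y = 2"
proof (rule gdist_eqI[where p="[x,z,y]"])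
  show "is_walk V E [x, z, y]" using assms
    by (auto simp: is_walk_def less_Suc_eq nth_Cons split: nat.splits)
  fix p m assume "is_walk V E p" "hd p = x" "last p = y" "length p = Suc m"
  then show "2 \<le> m" using walk1[of V E p] walk2[of V E p] assms
    by (cases m; cases "m - 1") auto
qed auto

lemma gd3: assumes "x \<noteq> y" "\<not> E x y" "\<not> (\<exists>z\<in>V. E x z \<and> E z y)"
  "u \<in> V" "v \<in> V" "E x u" "E u v" "E v y" "x \<in> V" "y \<in> V"
  shows "gdist V E x y = 3"
proof (rule gdist_eqI[where p="[x,u,v,y]"])
  show "is_walk V E [x, u, v, y]" using assms
    by (auto simp: is_walk_def less_Suc_eq nth_Cons split: nat.splits)
  fix p m assume "is_walk V E p" "hd p = x" "last p = y" "length p = Suc m"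
  then show "3 \<le> m" using walk1[of V E p] walk2[of V E p] walk3[of V E p] assms
    by (cases m; cases "m - 1"; cases "m - 2") auto
qed auto


lemma LV_iff: "(a, e) \<in> LV n \<longleftrightarrow> (\<exists>b. a \<noteq> b \<and> 1 \<le> a \<and> a \<le> n \<and> 1 \<le> b \<and> b \<le> n \<and> e = {a, b})"
proof
  assume "(a, e) \<in> LV n"
  then obtain i j where "1 \<le> i" "i < j" "j \<le> n" "e = {i, j}" "a \<in> {i, j}"
    unfolding LV_def by blast
  then show "\<exists>b. a \<noteq> b \<and> 1 \<le> a \<and> a \<le> n \<and> 1 \<le> b \<and> b \<le> n \<and> e = {a, b}"
    by (metis insert_commute insertE less_imp_le_nat nat_neq_iff order.trans singletonD)
next
  assume "\<exists>b. a \<noteq> b \<and> 1 \<le> a \<and> a \<le> n \<and> 1 \<le> b \<and> b \<le> n \<and> e = {a, b}"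
  then obtain b where b: "a \<noteq> b" "1 \<le> a" "a \<le> n" "1 \<le> b" "b \<le> n" "e = {a, b}" by blast
  show "(a, e) \<in> LV n"
  proof (cases "a < b")
    case True then show ?thesis using b unfolding LV_def by blast
  next
    case False then have "b < a" using b by simp
    have "e = {b, a}" using b by (simp add: insert_commute)
    then show ?thesis using b \<open>b < a\<close> unfolding LV_def by blast
  qed
qed

lemma LV_mem: "x \<in> LV n \<longleftrightarrow> (\<exists>a b. x = (a, {a, b}) \<and> a \<noteq> b \<and> 1 \<le> a \<and> a \<le> n \<and> 1 \<le> b \<and> b \<le> n)"
  by (cases x) (auto simp: LV_iff)

definition D :: "nat \<Rightarrow> nat \<Rightarrow> nat \<Rightarrow> nat \<Rightarrow> nat" where
  "D r a b k = (if a = k \<and> b = r then 0 else if a = k then 1 else if a = r \<and> b = k then 1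
     else if a = r then 2 else if b = k then 2 else 3)"

lemma LE_v: "a \<noteq> b \<Longrightarrow> c \<noteq> d \<Longrightarrow> LE (a, {a, b}) (c, {c, d}) \<longleftrightarrow>
   (a = c \<and> b \<noteq> d) \<or> (a = d \<and> b = c)"
  unfolding LE_def by (auto simp: doubleton_eq_iff)

lemma dist_q':
  assumes "a \<noteq> b" "1 \<le> a" "a \<le> n" "1 \<le> b" "b \<le> n" "1 \<le> k" "k \<le> n" "1 \<le> r" "r \<le> n" "k \<noteq> r"
  shows "gdist (LV n) LE (a, {a, b}) (k, {k, r}) = D r a b k"
proof -
  have mem: "\<And>c d. c \<noteq> d \<Longrightarrow> 1 \<le> c \<Longrightarrow> c \<le> n \<Longrightarrow> 1 \<le> d \<Longrightarrow> d \<le> n \<Longrightarrow> (c, {c, d}) \<in> LV n"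
    by (auto simp: LV_iff)
  have x: "(a, {a, b}) \<in> LV n" using assms mem by blast
  have y: "(k, {k, r}) \<in> LV n" using assms mem by blast
  show ?thesis
  proof (cases "a = k \<and> b = r")
    case True then show ?thesis using gd0 x by (simp add: D_def)
  next
    case nk: False
    have ne: "(a, {a, b}) \<noteq> (k, {k, r})" using nk by (auto simp: doubleton_eq_iff)
    show ?thesis
    proof (cases "a = k \<or> (a = r \<and> b = k)")
      case True
      then have "LE (a, {a, b}) (k, {k, r})" using assms nk by (subst LE_v) auto
      then show ?thesis using gd1[OF ne _ x y] True nk by (auto simp: D_def)
    next
      case n1: False
      have nLE: "\<not> LE (a, {a, b}) (k, {k, r})" using assms n1 by (subst LE_v) auto
      show ?thesis
      proof (cases "a = r \<or> b = k")
        case True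
        show ?thesis
        proof (cases "a = r")
          case ar: True
          have "gdist (LV n) LE (a, {a, b}) (k, {k, r}) = 2"
            proof (rule gd2[where E=LE and V="LV n" and z="(r, {r, k})", OF ne nLE _ _ _ x y])
            show "(r, {r, k}) \<in> LV n" using assms by (intro mem) auto
            show "LE (a, {a, b}) (r, {r, k})" using assms n1 ar by (simp add: LE_v)
            show "LE (r, {r, k}) (k, {k, r})" using assms by (simp add: LE_v)
          qed
          then show ?thesis using n1 nk ar by (auto simp: D_def)
        next
          case ar: False
          then have bk: "b = k" using True by simp
          have "gdist (LV n) LE (a, {a, b}) (k, {k, r}) = 2"
            proof (rule gd2[where E=LE and V="LV n" and z="(k, {k, a})", OF ne nLE _ _ _ x y])
            show "(k, {k, a}) \<in> LV n" using assms bk by (intro mem) auto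
            show "LE (a, {a, b}) (k, {k, a})" using assms n1 ar bk by (simp add: LE_v)
            show "LE (k, {k, a}) (k, {k, r})" using assms ar bk by (simp add: LE_v)
          qed
          then show ?thesis using n1 nk ar bk by (auto simp: D_def)
        qed
      next
        case n2: False
        have nz: "\<not> (\<exists>z\<in>LV n. LE (a, {a, b}) z \<and> LE z (k, {k, r}))"
        proof
          assume "\<exists>z\<in>LV n. LE (a, {a, b}) z \<and> LE z (k, {k, r})"
          then obtain z where z: "z \<in> LV n" "LE (a, {a, b}) z" "LE z (k, {k, r})" by blast
          from z(1) obtain c d where zc: "z = (c, {c, d})" "c \<noteq> d"
            unfolding LV_mem by blast
          have cd: "c \<noteq> d" "LE (a, {a, b}) (c, {c, d})" "LE (c, {c, d}) (k, {k, r})"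
            using z zc by simp_all
          have "(a = c \<and> b \<noteq> d) \<or> (a = d \<and> b = c)" using cd(2) LE_v[OF assms(1) cd(1)] by simp
          moreover have "(c = k \<and> d \<noteq> r) \<or> (c = r \<and> d = k)" using cd(3) LE_v[OF cd(1) assms(10)] by simp
          ultimately show False using n1 n2 by auto
        qed
        have "gdist (LV n) LE (a, {a, b}) (k, {k, r}) = 3"
          proof (rule gd3[where E=LE and V="LV n" and u="(a, {a, k})" and v="(k, {k, a})", OF ne nLE nz _ _ _ _ _ x y])
          show "(a, {a, k}) \<in> LV n" using assms n1 by (intro mem) auto
          show "(k, {k, a}) \<in> LV n" using assms n1 by (intro mem) auto
          show "LE (a, {a, b}) (a, {a, k})" using assms n1 n2 by (simp add: LE_v)
          show "LE (a, {a, k}) (k, {k, a})" using assms n1 n2 by (simp add: LE_v)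
          show "LE (k, {k, a}) (k, {k, r})" using assms n1 n2 by (simp add: LE_v)
        qed
        then show ?thesis using n1 n2 nk by (auto simp: D_def)
      qed
    qed
  qed
qed

lemma dist_q:
  assumes "a \<noteq> b" "1 \<le> a" "a \<le> n" "1 \<le> b" "b \<le> n" "1 \<le> k" "k \<le> n" "1 \<le> r" "r \<le> n" "k \<noteq> r"
  shows "gdist (LV n) LE (a, {a, b}) (k, {r, k}) = D r a b k"
  using dist_q'[OF assms] by (simp add: insert_commute)



lemma two_out:
  fixes n r a b :: nat assumes "n \<ge> 5"
  shows "\<exists>k1 k2. k1 \<noteq> k2 \<and> 1 \<le> k1 \<and> k1 \<le> n \<and> 1 \<le> k2 \<and> k2 \<le> n \<and> k1 \<notin> {r, a, b} \<and> k2 \<notin> {r, a, b}"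
proof -
  let ?X = "{1..5::nat} - {r, a, b}"
  have "card {r, a, b} \<le> 3" by (simp add: card_insert_le_m1)
  then have c: "card ?X \<ge> 2" using diff_card_le_card_Diff[of "{r,a,b}" "{1..5::nat}"] by simp
  then obtain k1 where k1: "k1 \<in> ?X" by (metis card.empty ex_in_conv not_numeral_le_zero)
  have "card (?X - {k1}) \<ge> 1" using c k1 by simp
  then obtain k2 where k2: "k2 \<in> ?X - {k1}" by (metis card.empty ex_in_conv not_one_le_zero)
  show ?thesis using k1 k2 assms by (intro exI[of _ k1] exI[of _ k2]) auto
qed

lemma pick: "P k1 \<or> P k2 \<Longrightarrow> (P k1 \<Longrightarrow> Q k1) \<Longrightarrow> (P k2 \<Longrightarrow> Q k2) \<Longrightarrow> \<exists>k. Q k \<and> P k"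
  by blast

lemma comb:
  fixes n r a b a' b' :: nat
  assumes n: "n \<ge> 5" and r: "1 \<le> r" "r \<le> n"
    and ab: "a \<noteq> b" "1 \<le> a" "a \<le> n" "1 \<le> b" "b \<le> n"
    and ab': "a' \<noteq> b'" "1 \<le> a'" "a' \<le> n" "1 \<le> b'" "b' \<le> n"
    and ne: "(a, b) \<noteq> (a', b')"
    and M: "\<And>k1 k2. k1 \<noteq> k2 \<Longrightarrow> 1 \<le> k1 \<Longrightarrow> k1 \<le> n \<Longrightarrow> 1 \<le> k2 \<Longrightarrow> k2 \<le> n \<Longrightarrow> k1 \<noteq> r \<Longrightarrow> k2 \<noteq> r \<Longrightarrow> P k1 \<or> P k2"
  shows "\<exists>k. (1 \<le> k \<and> k \<le> n \<and> k \<noteq> r \<and> D r a b k \<noteq> D r a' b' k) \<and> P k"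
proof -
  have three: "\<exists>k. (1 \<le> k \<and> k \<le> n \<and> k \<noteq> r \<and> D r a b k \<noteq> D r a' b' k) \<and> P k"
    if "a = r" "a' \<noteq> r" for a b a' b' :: nat
  proof -
    obtain k1 k2 where kk: "k1 \<noteq> k2" "1 \<le> k1" "k1 \<le> n" "1 \<le> k2" "k2 \<le> n" "k1 \<notin> {r, a', b'}" "k2 \<notin> {r, a', b'}"
      using two_out[OF n] by blast
    have "P k1 \<or> P k2" using M[OF kk(1-5)] kk(6,7) by simp
    then show ?thesis by (rule pick) (use kk that in \<open>simp_all add: D_def\<close>)
  qed
  show ?thesis
  proof (cases "a = r")
    case ar: True
    show ?thesis
    proof (cases "a' = r")
      case True
      then have "b \<noteq> b'" "b \<noteq> r" "b' \<noteq> r" using ar ne ab ab' by auto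
      then have "P b \<or> P b'" using M ab ab' by simp
      then show ?thesis by (rule pick) (use ar True \<open>b \<noteq> b'\<close> ab ab' \<open>b \<noteq> r\<close> \<open>b' \<noteq> r\<close> in \<open>simp_all add: D_def\<close>)
    next
      case False
      then show ?thesis using three[of a a' b b'] ar by simp
    qed
  next
    case nar: False
    show ?thesis
    proof (cases "a' = r")
      case True
      from three[of a' a b' b] True nar show ?thesis by metis
    next
      case nar': False
      show ?thesis
      proof (cases "a = a'")
        case False
        then have "P a \<or> P a'" using M ab ab' nar nar' by simp
        then show ?thesis by (rule pick) (use False nar nar' ab ab' in \<open>simp_all add: D_def\<close>)
      next
        case aa: True
        then have bb: "b \<noteq> b'" using ne by auto
        show ?thesis
        proof (cases "b = r \<or> b' = r")
          case False
          then have "P b \<or> P b'" using M ab ab' bb by simp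
          then show ?thesis by (rule pick) (use False aa bb nar ab ab' in \<open>simp_all add: D_def\<close>)
        next
          case True
          then consider "b = r" | "b' = r" by blast
          then show ?thesis
          proof cases
            case 1
            then have "P a \<or> P b'" using M ab ab' aa bb nar by simp
            then show ?thesis by (rule pick) (use 1 aa bb nar ab ab' in \<open>simp_all add: D_def\<close>)
          next
            case 2
            then have "P a \<or> P b" using M ab ab' aa bb nar by simp
            then show ?thesis by (rule pick) (use 2 aa bb nar ab ab' in \<open>simp_all add: D_def\<close>)
          qed
        qed
      qed
    qed
  qed
qed

lemma NW_eq: "1 \<le> r \<Longrightarrow> r \<le> n \<Longrightarrow> NW n r = (\<lambda>k. (k, {r, k})) ` ({1..n} - {r})"
proof
  assume r: "1 \<le> r" "r \<le> n"
  show "NW n r \<subseteq> (\<lambda>k. (k, {r, k})) ` ({1..n} - {r})"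
  proof
    fix x assume x: "x \<in> NW n r"
    then obtain a b where ab: "x = (a, {a, b})" "a \<noteq> b" "1 \<le> a" "a \<le> n" "1 \<le> b" "b \<le> n"
      unfolding NW_def LV_mem by blast
    from x obtain y where y: "y \<in> W n r" "LE x y" "fst x \<noteq> r" unfolding NW_def W_def by auto
    then obtain c where c: "y = (r, {r, c})" "r \<noteq> c" unfolding W_def LV_mem by auto
    have "{a, b} = {r, c}" using y c ab unfolding LE_def by auto
    then have "b = r" "c = a" using ab y c by (auto simp: doubleton_eq_iff)
    then show "x \<in> (\<lambda>k. (k, {r, k})) ` ({1..n} - {r})" using ab by (auto simp: insert_commute)
  qed
next
  assume r: "1 \<le> r" "r \<le> n"
  show "(\<lambda>k. (k, {r, k})) ` ({1..n} - {r}) \<subseteq> NW n r"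
  proof
    fix x assume "x \<in> (\<lambda>k. (k, {r, k})) ` ({1..n} - {r})"
    then obtain k where k0: "k \<in> {1..n} - {r}" "x = (k, {r, k})" by blast
    then have k: "x = (k, {r, k})" "1 \<le> k" "k \<le> n" "k \<noteq> r" by auto
    have "(k, {k, r}) \<in> LV n" unfolding LV_iff using k r by (intro exI[of _ r]) auto
    then have "x \<in> LV n" using k(1) by (simp add: insert_commute)
    moreover have "(r, {r, k}) \<in> LV n" unfolding LV_iff using k r by (intro exI[of _ k]) auto
    then have "(r, {r, k}) \<in> W n r" unfolding W_def by auto
    moreover have "LE x (r, {r, k})" using k unfolding LE_def by auto
    ultimately show "x \<in> NW n r" using k unfolding NW_def W_def by auto
  qed
qed

theorem lemma3p3:
  fixes n r :: nat and S :: "(nat \<times> nat set) set"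
  assumes "n \<ge> 5" and "1 \<le> r" and "r \<le> n"
    and "S \<subseteq> NW n r" and "card S \<ge> n - 2"
  shows "resolving_set (LV n) LE S"
proof -
  let ?q = "\<lambda>k. (k, {r, k})"
  have NW: "NW n r = ?q ` ({1..n} - {r})" using NW_eq assms by blast
  have inj: "inj ?q" by (auto simp: inj_def)
  have cNW: "card (NW n r) = n - 1" unfolding NW using assms
    by (simp add: card_image inj_on_subset[OF inj] card_Diff_singleton)
  have fin: "finite (NW n r)" unfolding NW by simp
  have M: "?q k1 \<in> S \<or> ?q k2 \<in> S" if "k1 \<noteq> k2" "1 \<le> k1" "k1 \<le> n" "1 \<le> k2" "k2 \<le> n" "k1 \<noteq> r" "k2 \<noteq> r"
    for k1 k2
  proof (rule ccontr)
    assume "\<not> (?q k1 \<in> S \<or> ?q k2 \<in> S)"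
    then have "S \<subseteq> NW n r - {?q k1, ?q k2}" using assms by auto
    moreover have "?q k1 \<in> NW n r" "?q k2 \<in> NW n r" unfolding NW using that by auto
    moreover have "?q k1 \<noteq> ?q k2" using that by auto
    ultimately have "card S \<le> card (NW n r - {?q k1, ?q k2})"
      "card (NW n r - {?q k1, ?q k2}) = n - 1 - 2"
      using card_mono[of "NW n r - {?q k1, ?q k2}" S] fin cNW
      by (auto simp: card_Diff_subset)
    then have "card S \<le> n - 3" by simp
    then show False using assms by linarith
  qed
  show ?thesis unfolding resolving_set_def
  proof (intro conjI ballI impI)
    show "S \<subseteq> LV n" using assms unfolding NW_def by auto
    fix x y assume x: "x \<in> LV n" and y: "y \<in> LV n" and xy: "x \<noteq> y"
    obtain a b where ab: "x = (a, {a, b})" "a \<noteq> b" "1 \<le> a" "a \<le> n" "1 \<le> b" "b \<le> n"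
      using x unfolding LV_mem by blast
    obtain a' b' where ab': "y = (a', {a', b'})" "a' \<noteq> b'" "1 \<le> a'" "a' \<le> n" "1 \<le> b'" "b' \<le> n"
      using y unfolding LV_mem by blast
    have ne: "(a, b) \<noteq> (a', b')" using xy ab ab' by auto
    obtain k where k: "1 \<le> k" "k \<le> n" "k \<noteq> r" "?q k \<in> S" "D r a b k \<noteq> D r a' b' k"
      using comb[OF assms(1,2,3) ab(2-6) ab'(2-6) ne, of "\<lambda>k. ?q k \<in> S"] M by blast
    have "gdist (LV n) LE x (?q k) \<noteq> gdist (LV n) LE y (?q k)"
      using dist_q[of a b n k r] dist_q[of a' b' n k r] ab ab' k assms by simp
    then show "\<exists>q\<in>S. gdist (LV n) LE x q \<noteq> gdist (LV n) LE y q" using k by blast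
  qed
qed

end
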